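(* Let $G_1=(T_1,A_1)$ and $G_2=(T_2,A_2)$ be games such that $T_1,T_2,A_1,A_2$ are at most countable and both $G_1$ and $G_2$ are injective in $\mathbf{Games}_{emb}$ with respect to embeddings between finite games. If $G=(T,A)\le G_1$ is a finite game and $f\colon G\to G_2$ is a game embedding, then $f$ extends to an isomorphism $\tilde f\colon G_1\to G_2$, i.e. a bijective chronological map $\tilde f\colon T_1\to T_2$ with $\tilde f|_T=f$ and $\overline{\tilde f}(R)\in A_2\iff R\in A_1$ for all $R\in\mathrm{Run}(T_1)$.
   Context: A game tree is $T\subseteq M^{<\omega}$ (some set $M$) closed under initial segments such that every $t\in T$ has an extension $t^\frown x\in T$; $|t|$ is the length and $t\restriction k$ the initial segment of length $k$. $\mathrm{Run}(T)=\{R\in M^\omega:R\restriction n\in T\ \forall n\}$. A game is $(T,A)$ with $A\subseteq\mathrm{Run}(T)$; it is finite if $\mathrm{Run}(T)$ is finite. $(T,A)\le(T',A')$ means $T\subseteq T'$ and $A=A'\cap\mathrm{Run}(T)$. A chronological map $f\colon T_1\to T_2$ satisfies $|f(t)|=|t|$, $f(t\restriction k)=f(t)\restriction k$, and induces $\bar f$ on runs by $\bar f(R)\restriction n=f(R\restriction n)$. A game embedding $(T_1,A_1)\to(T_2,A_2)$ is an injective chronological $f$ with $\bar f(R)\in A_2\iff R\in A_1$ for all runs $R$. $\mathbf{Games}_{emb}$ is the category of games with game embeddings. A game $X$ is injective in $\mathbf{Games}_{emb}$ with respect to embeddings between finite games if for all finite games $C,D$, every game embedding $g\colon C\to D$ and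 every game embedding $f\colon C\to X$ there is a game embedding $h\colon D\to X$ with $h\circ g=f$. *)

theory Defs
  imports "HOL-Library.Countable_Set"
begin

definition restr :: "(nat \<Rightarrow> 'm) \<Rightarrow> nat \<Rightarrow> 'm list" where
  "restr R n = map R [0..<n]"

definition game_tree :: "'m list set \<Rightarrow> bool" where
  "game_tree T \<longleftrightarrow> (\<forall>t\<in>T. \<forall>k. take k t \<in> T) \<and> (\<forall>t\<in>T. \<exists>x. t @ [x] \<in> T)"

definition runs :: "'m list set \<Rightarrow> (nat \<Rightarrow> 'm) set" where
  "runs T = {R. \<forall>n. restr R n \<in> T}"

definition game :: "'m list set \<Rightarrow> (nat \<Rightarrow> 'm) set \<Rightarrow> bool" where
  "game T A \<longleftrightarrow> game_tree T \<and> A \<subseteq> runs T"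

definition finite_game :: "'m list set \<Rightarrow> (nat \<Rightarrow> 'm) set \<Rightarrow> bool" where
  "finite_game T A \<longleftrightarrow> game T A \<and> finite (runs T)"

definition game_le :: "'m list set \<Rightarrow> (nat \<Rightarrow> 'm) set \<Rightarrow> 'm list set \<Rightarrow> (nat \<Rightarrow> 'm) set \<Rightarrow> bool" where
  "game_le T A T' A' \<longleftrightarrow> T \<subseteq> T' \<and> A = A' \<inter> runs T"

definition chronological :: "('a list \<Rightarrow> 'b list) \<Rightarrow> 'a list set \<Rightarrow> 'b list set \<Rightarrow> bool" where
  "chronological f T1 T2 \<longleftrightarrow>
     (\<forall>t\<in>T1. f t \<in> T2 \<and> length (f t) = length t \<and> (\<forall>k. f (take k t) = take k (f t)))"

text \<open>Induced map on runs: \<open>run_map f R \<restriction> n = f (R \<restriction> n)\<close>.\<close>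
definition run_map :: "('a list \<Rightarrow> 'b list) \<Rightarrow> (nat \<Rightarrow> 'a) \<Rightarrow> (nat \<Rightarrow> 'b)" where
  "run_map f R = (\<lambda>n. f (restr R (Suc n)) ! n)"

definition game_embedding ::
  "('a list \<Rightarrow> 'b list) \<Rightarrow> 'a list set \<Rightarrow> (nat \<Rightarrow> 'a) set \<Rightarrow> 'b list set \<Rightarrow> (nat \<Rightarrow> 'b) set \<Rightarrow> bool" where
  "game_embedding f T1 A1 T2 A2 \<longleftrightarrow>
     chronological f T1 T2 \<and> inj_on f T1 \<and>
     (\<forall>R\<in>runs T1. run_map f R \<in> A2 \<longleftrightarrow> R \<in> A1)"

text \<open>Finite games have countable
trees, hence every finite game is isomorphic to one with moves in \<open>nat\<close>; so it suffices
to quantify over finite games with move type \<open>nat\<close>.\<close>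
definition injective_fin :: "'m list set \<Rightarrow> (nat \<Rightarrow> 'm) set \<Rightarrow> bool" where
  "injective_fin X XA \<longleftrightarrow>
     (\<forall>(CT :: nat list set) CA (DT :: nat list set) DA g f.
        finite_game CT CA \<longrightarrow> finite_game DT DA \<longrightarrow>
        game_embedding g CT CA DT DA \<longrightarrow> game_embedding f CT CA X XA \<longrightarrow>
        (\<exists>h. game_embedding h DT DA X XA \<and> (\<forall>t\<in>CT. h (g t) = f t)))"

end

theory Submission
  imports Defs
begin

lemma length_restr[simp]: "length (restr R n) = n"
  by (simp add: restr_def)

lemma nth_restr[simp]: "i < n \<Longrightarrow> restr R n ! i = R i"
  by (simp add: restr_def)

lemma take_restr[simp]: "take k (restr R n) = restr R (min k n)"
  by (cases "k \<le> n") (auto simp: restr_def take_map min_def)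

lemma restr_Suc: "restr R (Suc n) = restr R n @ [R n]"
  by (simp add: restr_def)

lemma restr_0[simp]: "restr R 0 = []"
  by (simp add: restr_def)

lemma run_eqI: "(\<And>n. restr R n = restr S n) \<Longrightarrow> R = S"
proof
  fix i assume "\<And>n. restr R n = restr S n"
  hence "restr R (Suc i) ! i = restr S (Suc i) ! i" by simp
  thus "R i = S i" by simp
qed

lemma restr_mono_eq: "restr R n = restr S n \<Longrightarrow> m \<le> n \<Longrightarrow> restr R m = restr S m"
  by (metis min.absorb1 take_restr)

lemma run_map_cong: "(\<And>k. f (restr R k) = g (restr R k)) \<Longrightarrow> run_map f R = run_map g R"
  by (simp add: run_map_def)

lemma run_map_id[simp]: "run_map id R = R"
  by (simp add: run_map_def)

lemma chron_restr:
  assumes "chronological f T T'" "R \<in> runs T"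
  shows "f (restr R n) = restr (run_map f R) n"
proof (rule nth_equalityI)
  have rT: "\<And>m. restr R m \<in> T" using assms(2) by (simp add: runs_def)
  show "length (f (restr R n)) = length (restr (run_map f R) n)"
    using assms(1) rT by (simp add: chronological_def)
  fix i assume "i < length (f (restr R n))"
  hence i: "i < n" using assms(1) rT by (simp add: chronological_def)
  have "f (restr R n) ! i = take (Suc i) (f (restr R n)) ! i" by simp
  also have "\<dots> = f (take (Suc i) (restr R n)) ! i"
    using assms(1) rT by (simp add: chronological_def del: take_restr)
  also have "\<dots> = f (restr R (Suc i)) ! i" using i by (simp add: min_def)
  also have "\<dots> = restr (run_map f R) n ! i" using i by (simp add: run_map_def)
  finally show "f (restr R n) ! i = restr (run_map f R) n ! i" .
qed

lemma chron_runs: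
  assumes "chronological f T T'" "R \<in> runs T"
  shows "run_map f R \<in> runs T'"
proof -
  have "restr (run_map f R) n \<in> T'" for n
  proof -
    have "restr R n \<in> T" using assms(2) by (simp add: runs_def)
    hence "f (restr R n) \<in> T'" using assms(1) by (simp add: chronological_def)
    thus ?thesis using chron_restr[OF assms] by simp
  qed
  thus ?thesis by (simp add: runs_def)
qed

lemma chron_inj_runs:
  assumes "chronological f T T'" "inj_on f T" "R \<in> runs T" "S \<in> runs T"
    "run_map f R = run_map f S"
  shows "R = S"
proof (rule run_eqI)
  fix n
  have "f (restr R n) = f (restr S n)"
    using chron_restr[OF assms(1,3)] chron_restr[OF assms(1,4)] assms(5) by simp
  thus "restr R n = restr S n" using assms(2,3,4) by (auto simp: runs_def inj_on_def)
qed

lemma runs_mono: "T \<subseteq> T' \<Longrightarrow> runs T \<subseteq> runs T'"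
  by (auto simp: runs_def)

definition treeOf :: "(nat \<Rightarrow> 'm) set \<Rightarrow> 'm list set" where
  "treeOf F = {restr R n | R n. R \<in> F}"

lemma treeOf_I[intro]: "R \<in> F \<Longrightarrow> restr R n \<in> treeOf F"
  by (auto simp: treeOf_def)

lemma treeOf_mono: "F \<subseteq> G \<Longrightarrow> treeOf F \<subseteq> treeOf G"
  by (auto simp: treeOf_def)

lemma treeOf_sub: "F \<subseteq> runs T \<Longrightarrow> treeOf F \<subseteq> T"
  by (auto simp: treeOf_def runs_def)

lemma game_tree_treeOf: "game_tree (treeOf F)"
  unfolding game_tree_def
proof (intro conjI ballI allI)
  fix t k assume "t \<in> treeOf F"
  then obtain R n where "R \<in> F" "t = restr R n" by (auto simp: treeOf_def)
  thus "take k t \<in> treeOf F" by auto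
next
  fix t assume "t \<in> treeOf F"
  then obtain R n where "R \<in> F" "t = restr R n" by (auto simp: treeOf_def)
  hence "t @ [R n] \<in> treeOf F" by (metis restr_Suc treeOf_I)
  thus "\<exists>x. t @ [x] \<in> treeOf F" by blast
qed

lemma separate:
  assumes "finite F" "S \<notin> F"
  shows "\<exists>N. \<forall>R\<in>F. \<forall>m\<ge>N. restr R m \<noteq> restr S m"
  using assms
proof (induction F rule: finite_induct)
  case empty then show ?case by auto
next
  case (insert R F)
  then obtain N where N: "\<forall>R\<in>F. \<forall>m\<ge>N. restr R m \<noteq> restr S m" by auto
  from insert have "R \<noteq> S" by auto
  then obtain i where i: "R i \<noteq> S i" by auto
  have "\<forall>m\<ge>Suc i. restr R m \<noteq> restr S m"
  proof (intro allI impI)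
    fix m assume m: "Suc i \<le> m"
    show "restr R m \<noteq> restr S m"
    proof
      assume "restr R m = restr S m"
      hence "restr R m ! i = restr S m ! i" by simp
      thus False using i m by simp
    qed
  qed
  with N show ?case by (intro exI[of _ "max N (Suc i)"]) auto
qed

lemma runs_treeOf: assumes "finite F" shows "runs (treeOf F) = F"
proof
  show "F \<subseteq> runs (treeOf F)" by (auto simp: runs_def)
  show "runs (treeOf F) \<subseteq> F"
  proof
    fix S assume S: "S \<in> runs (treeOf F)"
    show "S \<in> F"
    proof (rule ccontr)
      assume "S \<notin> F"
      then obtain N where N: "\<forall>R\<in>F. \<forall>m\<ge>N. restr R m \<noteq> restr S m"
        using separate[OF assms] by blast
      from S have "restr S N \<in> treeOf F" by (simp add: runs_def)
      then obtain R n where R: "R \<in> F" "restr S N = restr R n" by (auto simp: treeOf_def)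
      hence "n = N" by (metis length_restr)
      with R N show False by (metis order_refl)
    qed
  qed
qed

lemma finite_game_treeOf: "finite F \<Longrightarrow> B \<subseteq> F \<Longrightarrow> finite_game (treeOf F) B"
  by (simp add: finite_game_def game_def game_tree_treeOf runs_treeOf)


lemma treeOf_take: "t \<in> treeOf F \<Longrightarrow> take k t \<in> treeOf F"
  using game_tree_treeOf unfolding game_tree_def by blast

lemma emb_comp:
  assumes "game_embedding f T A T' A'" "game_embedding g T' A' T'' A''"
  shows "game_embedding (g \<circ> f) T A T'' A''"
proof -
  have cf: "chronological f T T'" and cg: "chronological g T' T''"
    using assms by (auto simp: game_embedding_def)
  have "chronological (g \<circ> f) T T''"
    using cf cg unfolding chronological_def by auto
  moreover have "inj_on (g \<circ> f) T"
    using assms cf by (auto simp: game_embedding_def chronological_def intro!: comp_inj_on inj_on_subset[of g T'])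
  moreover have "\<forall>R\<in>runs T. run_map (g \<circ> f) R \<in> A'' \<longleftrightarrow> R \<in> A"
  proof
    fix R assume R: "R \<in> runs T"
    have fr: "run_map f R \<in> runs T'" using chron_runs[OF cf R] .
    have "run_map (g \<circ> f) R = run_map g (run_map f R)"
      unfolding run_map_def[of "g \<circ> f"] run_map_def[of g]
      using chron_restr[OF cf R] by simp
    thus "run_map (g \<circ> f) R \<in> A'' \<longleftrightarrow> R \<in> A"
      using assms R fr by (simp add: game_embedding_def)
  qed
  ultimately show ?thesis by (simp add: game_embedding_def)
qed

lemma emb_target:
  assumes "game_embedding f T A T' A'" "game_le T' A' T'' A''"
  shows "game_embedding f T A T'' A''"
proof -
  have cf: "chronological f T T'" using assms by (auto simp: game_embedding_def)
  have "chronological f T T''" using cf assms(2) by (auto simp: chronological_def game_le_def)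
  moreover have "\<forall>R\<in>runs T. run_map f R \<in> A'' \<longleftrightarrow> R \<in> A"
  proof
    fix R assume R: "R \<in> runs T"
    have fr: "run_map f R \<in> runs T'" using chron_runs[OF cf R] .
    thus "run_map f R \<in> A'' \<longleftrightarrow> R \<in> A" using assms R by (auto simp: game_embedding_def game_le_def)
  qed
  ultimately show ?thesis using assms by (simp add: game_embedding_def)
qed

lemma emb_id: "game_le T A T' A' \<Longrightarrow> game_embedding id T A T' A'"
  by (auto simp: game_embedding_def game_le_def chronological_def)

lemma img:
  assumes fin: "finite F" and ch: "chronological h (treeOf F) X" and inj: "inj_on h (treeOf F)"
  shows img_tree: "h ` treeOf F = treeOf (run_map h ` F)"
    and img_inj: "inj_on (run_map h) F"
    and img_emb: "game_embedding h (treeOf F) (B \<inter> F) (treeOf (run_map h ` F)) (run_map h ` (B \<inter> F))"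
    and img_inv: "game_embedding (inv_into (treeOf F) h) (treeOf (run_map h ` F)) (run_map h ` (B \<inter> F)) (treeOf F) (B \<inter> F)"
    and img_inv_run: "\<forall>R\<in>F. run_map (inv_into (treeOf F) h) (run_map h R) = R"
proof -
  have Fr: "\<And>R. R \<in> F \<Longrightarrow> R \<in> runs (treeOf F)" using runs_treeOf[OF fin] by simp
  have hr: "\<And>R n. R \<in> F \<Longrightarrow> h (restr R n) = restr (run_map h R) n"
    using chron_restr[OF ch Fr] by blast
  show tr: "h ` treeOf F = treeOf (run_map h ` F)"
  proof
    show "h ` treeOf F \<subseteq> treeOf (run_map h ` F)"
    proof
      fix s assume "s \<in> h ` treeOf F"
      then obtain R n where "R \<in> F" "s = h (restr R n)" by (auto simp: treeOf_def)
      thus "s \<in> treeOf (run_map h ` F)" using hr by auto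
    qed
    show "treeOf (run_map h ` F) \<subseteq> h ` treeOf F"
    proof
      fix s assume "s \<in> treeOf (run_map h ` F)"
      then obtain R n where "R \<in> F" "s = restr (run_map h R) n" by (auto simp: treeOf_def)
      thus "s \<in> h ` treeOf F" using hr by (metis image_eqI treeOf_I)
    qed
  qed
  show ri: "inj_on (run_map h) F"
  proof (rule inj_onI)
    fix R S assume "R \<in> F" "S \<in> F" "run_map h R = run_map h S"
    thus "R = S" using chron_inj_runs[OF ch inj Fr[of R] Fr[of S]] by simp
  qed
  have finG: "finite (run_map h ` F)" using fin by simp
  have chh: "chronological h (treeOf F) (treeOf (run_map h ` F))"
    using ch tr unfolding chronological_def by blast
  show "game_embedding h (treeOf F) (B \<inter> F) (treeOf (run_map h ` F)) (run_map h ` (B \<inter> F))"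
    unfolding game_embedding_def using chh inj runs_treeOf[OF fin] ri
    by (auto simp: inj_on_image_mem_iff[OF ri])
  have ir: "\<And>R. R \<in> F \<Longrightarrow> run_map (inv_into (treeOf F) h) (run_map h R) = R"
  proof -
    fix R assume R: "R \<in> F"
    show "run_map (inv_into (treeOf F) h) (run_map h R) = R"
    proof
      fix n
      have "inv_into (treeOf F) h (restr (run_map h R) (Suc n)) = restr R (Suc n)"
        using hr[OF R, of "Suc n", symmetric] inv_into_f_f[OF inj] R by auto
      thus "run_map (inv_into (treeOf F) h) (run_map h R) n = R n"
        by (simp add: run_map_def)
    qed
  qed
  thus "\<forall>R\<in>F. run_map (inv_into (treeOf F) h) (run_map h R) = R" by blast
  have chi: "chronological (inv_into (treeOf F) h) (treeOf (run_map h ` F)) (treeOf F)"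
    unfolding chronological_def
  proof (intro ballI conjI allI)
    fix s assume "s \<in> treeOf (run_map h ` F)"
    then obtain t where t: "t \<in> treeOf F" "s = h t" using tr by blast
    show "inv_into (treeOf F) h s \<in> treeOf F" using t inj by simp
    show "length (inv_into (treeOf F) h s) = length s"
      using t inj ch by (simp add: chronological_def)
    fix k
    have "take k s = h (take k t)" using t ch by (simp add: chronological_def)
    thus "inv_into (treeOf F) h (take k s) = take k (inv_into (treeOf F) h s)"
      using t inj treeOf_take[OF t(1), of k] by (simp add: inv_into_f_f)
  qed
  show "game_embedding (inv_into (treeOf F) h) (treeOf (run_map h ` F)) (run_map h ` (B \<inter> F)) (treeOf F) (B \<inter> F)"
    unfolding game_embedding_def
  proof (intro conjI chi)
    show "inj_on (inv_into (treeOf F) h) (treeOf (run_map h ` F))"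
      by (rule inj_on_inv_into) (simp add: tr)
    show "\<forall>R\<in>runs (treeOf (run_map h ` F)). (run_map (inv_into (treeOf F) h) R \<in> B \<inter> F) = (R \<in> run_map h ` (B \<inter> F))"
    proof
      fix S assume "S \<in> runs (treeOf (run_map h ` F))"
      hence "S \<in> run_map h ` F" using runs_treeOf[OF finG] by simp
      then obtain R where R: "R \<in> F" "S = run_map h R" by blast
      have "(run_map h R \<in> run_map h ` (B \<inter> F)) = (R \<in> B \<inter> F)"
        by (rule inj_on_image_mem_iff[OF ri]) (use R in auto)
      thus "(run_map (inv_into (treeOf F) h) S \<in> B \<inter> F) = (S \<in> run_map h ` (B \<inter> F))"
        using R ir[OF R(1)] by simp
    qed
  qed
qed


lemma inv_emb:
  assumes fin: "finite F" and Fr: "F \<subseteq> runs T" and e: "game_embedding \<phi> (treeOf F) (A \<inter> F) T' A'"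
  shows inv_emb_emb: "game_embedding (inv_into (treeOf F) \<phi>) (treeOf (run_map \<phi> ` F)) (A' \<inter> run_map \<phi> ` F) T A"
    and inv_emb_runs: "run_map \<phi> ` F \<subseteq> runs T'"
    and inv_emb_tree: "\<phi> ` treeOf F = treeOf (run_map \<phi> ` F)"
    and inv_emb_inv: "\<forall>R\<in>F. run_map (inv_into (treeOf F) \<phi>) (run_map \<phi> R) = R"
proof -
  have ch: "chronological \<phi> (treeOf F) T'" and inj: "inj_on \<phi> (treeOf F)"
    and rr: "\<forall>R\<in>runs (treeOf F). run_map \<phi> R \<in> A' \<longleftrightarrow> R \<in> A \<inter> F"
    using e by (auto simp: game_embedding_def)
  have rF: "runs (treeOf F) = F" using runs_treeOf[OF fin] .
  show "run_map \<phi> ` F \<subseteq> runs T'" using chron_runs[OF ch] rF by auto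
  show "\<phi> ` treeOf F = treeOf (run_map \<phi> ` F)" using img_tree[OF fin ch inj] .
  show "\<forall>R\<in>F. run_map (inv_into (treeOf F) \<phi>) (run_map \<phi> R) = R" using img_inv_run[OF fin ch inj] .
  have eq: "A' \<inter> run_map \<phi> ` F = run_map \<phi> ` (A \<inter> F)" using rr rF by auto
  have le: "game_le (treeOf F) (A \<inter> F) T A"
    using treeOf_sub[OF Fr] rF by (auto simp: game_le_def)
  show "game_embedding (inv_into (treeOf F) \<phi>) (treeOf (run_map \<phi> ` F)) (A' \<inter> run_map \<phi> ` F) T A"
    unfolding eq using emb_target[OF img_inv[OF fin ch inj, of A] le] .
qed

lemma exists_run:
  assumes gt: "game_tree T" and t: "t \<in> T"
  shows "\<exists>R\<in>runs T. restr R (length t) = t"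
proof -
  define nx where "nx u = (SOME x. u @ [x] \<in> T)" for u
  define ext where "ext = rec_nat t (\<lambda>_ u. u @ [nx u])"
  have e0: "ext 0 = t" and eS: "\<And>n. ext (Suc n) = ext n @ [nx (ext n)]" by (simp_all add: ext_def)
  have eT: "ext n \<in> T" for n
  proof (induction n)
    case 0 then show ?case using t e0 by simp
  next
    case (Suc n)
    have "\<exists>x. ext n @ [x] \<in> T" using gt Suc unfolding game_tree_def by blast
    hence "ext n @ [nx (ext n)] \<in> T" unfolding nx_def by (rule someI_ex)
    thus ?case using eS by simp
  qed
  have len: "length (ext n) = length t + n" for n by (induction n) (simp_all add: e0 eS)
  have pref: "take (length (ext n)) (ext (n + k)) = ext n" for n k
  proof (induction k)
    case 0 then show ?case by simp
  next
    case (Suc k)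
    have "length (ext n) \<le> length (ext (n + k))" using len by simp
    thus ?case using Suc eS[of "n+k"] by simp
  qed
  define R where "R i = ext (Suc i) ! i" for i
  have rR: "restr R m = take m (ext m)" for m
  proof (rule nth_equalityI)
    show "length (restr R m) = length (take m (ext m))" using len by simp
    fix i assume "i < length (restr R m)"
    hence i: "i < m" by simp
    have "take (length (ext (Suc i))) (ext (Suc i + (m - Suc i))) = ext (Suc i)" by (rule pref)
    hence "take (length (ext (Suc i))) (ext m) = ext (Suc i)" using i by simp
    hence "ext (Suc i) ! i = ext m ! i" using len i by (metis add_Suc_right less_add_Suc2 nth_take)
    thus "restr R m ! i = take m (ext m) ! i" using i R_def by simp
  qed
  have "R \<in> runs T"
    unfolding runs_def using rR eT gt unfolding game_tree_def by auto
  moreover have "restr R (length t) = t"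
    using rR pref[of 0 "length t"] e0 by simp
  ultimately show ?thesis by blast
qed

lemma runs_empty[simp]: "runs {} = {}"
  by (auto simp: runs_def)

lemma injective_nonempty:
  assumes "injective_fin X XA" shows "X \<noteq> {}"
proof
  assume X: "X = {}"
  define D :: "nat list set" where "D = treeOf {\<lambda>_. 0}"
  have fC: "finite_game ({}::nat list set) {}"
    by (simp add: finite_game_def game_def game_tree_def)
  have fD: "finite_game D {}" unfolding D_def by (rule finite_game_treeOf) auto
  have g: "game_embedding id ({}::nat list set) {} D {}"
    by (simp add: game_embedding_def chronological_def)
  have f: "game_embedding (\<lambda>_. []) ({}::nat list set) {} X XA"
    by (simp add: game_embedding_def chronological_def)
  obtain h where h: "game_embedding h D {} X XA"
    using assms fC fD g f unfolding injective_fin_def by blast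
  have "[] \<in> D" unfolding D_def using treeOf_I[of "\<lambda>_. 0" "{\<lambda>_. 0}" 0] by simp
  hence "h [] \<in> X" using h by (simp add: game_embedding_def chronological_def)
  thus False using X by simp
qed

lemma forth:
  assumes cT: "countable T1" and inj2: "injective_fin T2 A2" and fin: "finite F"
    and Fr: "F \<subseteq> runs T1" and R: "R \<in> runs T1"
    and e: "game_embedding \<phi> (treeOf F) (A1 \<inter> F) T2 A2"
  shows "\<exists>\<phi>'. game_embedding \<phi>' (treeOf (insert R F)) (A1 \<inter> insert R F) T2 A2 \<and>
              (\<forall>t\<in>treeOf F. \<phi>' t = \<phi> t)"
proof -
  define M where "M = \<Union>(set ` T1)"
  have cM: "countable M" unfolding M_def using cT by (intro countable_UN) (auto intro: countable_finite)
  define E where "E = map (to_nat_on M)"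
  define F' where "F' = insert R F"
  have fin': "finite F'" using fin by (simp add: F'_def)
  have Fr': "F' \<subseteq> runs T1" using Fr R by (simp add: F'_def)
  have sub: "treeOf F \<subseteq> treeOf F'" by (rule treeOf_mono) (auto simp: F'_def)
  have injE': "inj_on E (treeOf F')"
    unfolding E_def
  proof (rule inj_on_mapI)
    have "\<Union>(set ` treeOf F') \<subseteq> M" using treeOf_sub[OF Fr'] by (auto simp: M_def)
    thus "inj_on (to_nat_on M) (\<Union>(set ` treeOf F'))" using inj_on_to_nat_on[OF cM] inj_on_subset by blast
  qed
  have injE: "inj_on E (treeOf F)" using injE' sub inj_on_subset by blast
  have chE: "chronological E S UNIV" for S by (simp add: chronological_def E_def take_map)
  define GF where "GF = run_map E ` F"
  define GF' where "GF' = run_map E ` F'"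
  define CA where "CA = run_map E ` (A1 \<inter> F)"
  define DA where "DA = run_map E ` (A1 \<inter> F')"
  have iota: "game_embedding (inv_into (treeOf F) E) (treeOf GF) CA (treeOf F) (A1 \<inter> F)"
    unfolding GF_def CA_def by (rule img_inv[OF fin chE injE])
  have fCe: "game_embedding (\<phi> \<circ> inv_into (treeOf F) E) (treeOf GF) CA T2 A2"
    by (rule emb_comp[OF iota e])
  have rinj: "inj_on (run_map E) F'" by (rule img_inj[OF fin' chE injE'])
  have le: "game_le (treeOf GF) CA (treeOf GF') DA"
    unfolding game_le_def
  proof
    show "treeOf GF \<subseteq> treeOf GF'" unfolding GF_def GF'_def F'_def by (rule treeOf_mono) auto
    have "DA \<inter> runs (treeOf GF) = run_map E ` (A1 \<inter> F') \<inter> run_map E ` F"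
      unfolding DA_def GF_def using runs_treeOf[of "run_map E ` F"] fin by simp
    also have "\<dots> = run_map E ` (A1 \<inter> F' \<inter> F)"
      by (rule inj_on_image_Int[symmetric, OF rinj]) (auto simp: F'_def)
    also have "\<dots> = CA" unfolding CA_def F'_def by (metis Int_absorb1 Int_assoc subset_insertI)
    finally show "CA = DA \<inter> runs (treeOf GF)" by simp
  qed
  have gid: "game_embedding id (treeOf GF) CA (treeOf GF') DA" by (rule emb_id[OF le])
  have fgC: "finite_game (treeOf GF) CA"
    using fin by (intro finite_game_treeOf) (auto simp: GF_def CA_def)
  have fgD: "finite_game (treeOf GF') DA"
    using fin' by (intro finite_game_treeOf) (auto simp: GF'_def DA_def)
  obtain h where h: "game_embedding h (treeOf GF') DA T2 A2"
    and hag: "\<forall>t\<in>treeOf GF. h (id t) = (\<phi> \<circ> inv_into (treeOf F) E) t"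
    using inj2 fgC fgD gid fCe unfolding injective_fin_def by blast
  have Ee: "game_embedding E (treeOf F') (A1 \<inter> F') (treeOf GF') DA"
    unfolding GF'_def DA_def by (rule img_emb[OF fin' chE injE'])
  have "game_embedding (h \<circ> E) (treeOf F') (A1 \<inter> F') T2 A2" by (rule emb_comp[OF Ee h])
  moreover have "\<forall>t\<in>treeOf F. (h \<circ> E) t = \<phi> t"
  proof
    fix t assume t: "t \<in> treeOf F"
    have "E t \<in> treeOf GF" using img_tree[OF fin chE injE] t unfolding GF_def by blast
    hence "h (E t) = \<phi> (inv_into (treeOf F) E (E t))" using hag by simp
    thus "(h \<circ> E) t = \<phi> t" using t injE by simp
  qed
  ultimately show ?thesis unfolding F'_def by blast
qed


lemma step:
  assumes cT1: "countable T1" and cT2: "countable T2"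
    and inj1: "injective_fin T1 A1" and inj2: "injective_fin T2 A2"
    and fin: "finite F" and Fr: "F \<subseteq> runs T1"
    and e: "game_embedding \<phi> (treeOf F) (A1 \<inter> F) T2 A2"
    and R: "R \<in> runs T1" and S: "S \<in> runs T2"
  shows "\<exists>F' \<phi>'. (finite F' \<and> F' \<subseteq> runs T1 \<and> game_embedding \<phi>' (treeOf F') (A1 \<inter> F') T2 A2) \<and>
     treeOf F \<subseteq> treeOf F' \<and> (\<forall>t\<in>treeOf F. \<phi>' t = \<phi> t) \<and> R \<in> F' \<and> S \<in> run_map \<phi>' ` F'"
proof -
  define F1 where "F1 = insert R F"
  obtain \<phi>1 where e1: "game_embedding \<phi>1 (treeOf F1) (A1 \<inter> F1) T2 A2"
    and ag1: "\<forall>t\<in>treeOf F. \<phi>1 t = \<phi> t"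
    using forth[OF cT1 inj2 fin Fr R e] unfolding F1_def by blast
  have fin1: "finite F1" using fin by (simp add: F1_def)
  have Fr1: "F1 \<subseteq> runs T1" using Fr R by (simp add: F1_def)
  define G where "G = run_map \<phi>1 ` F1"
  define \<psi> where "\<psi> = inv_into (treeOf F1) \<phi>1"
  have e\<psi>: "game_embedding \<psi> (treeOf G) (A2 \<inter> G) T1 A1"
    unfolding \<psi>_def G_def by (rule inv_emb_emb[OF fin1 Fr1 e1])
  have Gr: "G \<subseteq> runs T2" unfolding G_def by (rule inv_emb_runs[OF fin1 Fr1 e1])
  have finG: "finite G" using fin1 by (simp add: G_def)
  have trG: "\<phi>1 ` treeOf F1 = treeOf G" unfolding G_def by (rule inv_emb_tree[OF fin1 Fr1 e1])
  define G' where "G' = insert S G"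
  obtain \<psi>' where e\<psi>': "game_embedding \<psi>' (treeOf G') (A2 \<inter> G') T1 A1"
    and ag\<psi>: "\<forall>t\<in>treeOf G. \<psi>' t = \<psi> t"
    using forth[OF cT2 inj1 finG Gr S e\<psi>] unfolding G'_def by blast
  have finG': "finite G'" using finG by (simp add: G'_def)
  have Gr': "G' \<subseteq> runs T2" using Gr S by (simp add: G'_def)
  define F' where "F' = run_map \<psi>' ` G'"
  define \<phi>' where "\<phi>' = inv_into (treeOf G') \<psi>'"
  have e': "game_embedding \<phi>' (treeOf F') (A1 \<inter> F') T2 A2"
    unfolding \<phi>'_def F'_def by (rule inv_emb_emb[OF finG' Gr' e\<psi>'])
  have Fr': "F' \<subseteq> runs T1" unfolding F'_def by (rule inv_emb_runs[OF finG' Gr' e\<psi>'])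
  have fin': "finite F'" using finG' by (simp add: F'_def)
  have trF': "\<psi>' ` treeOf G' = treeOf F'" unfolding F'_def by (rule inv_emb_tree[OF finG' Gr' e\<psi>'])
  have invS: "run_map \<phi>' (run_map \<psi>' S) = S"
    using inv_emb_inv[OF finG' Gr' e\<psi>'] unfolding \<phi>'_def G'_def by simp
  have inj\<phi>1: "inj_on \<phi>1 (treeOf F1)" using e1 by (simp add: game_embedding_def)
  have inj\<psi>': "inj_on \<psi>' (treeOf G')" using e\<psi>' by (simp add: game_embedding_def)
  have GG': "treeOf G \<subseteq> treeOf G'" by (rule treeOf_mono) (auto simp: G'_def)
  have key: "t \<in> treeOf F' \<and> \<phi>' t = \<phi>1 t" if t: "t \<in> treeOf F1" for t
  proof -
    have a: "\<phi>1 t \<in> treeOf G" using trG t by blast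
    have "\<psi> (\<phi>1 t) = t" unfolding \<psi>_def using inj\<phi>1 t by simp
    hence b: "\<psi>' (\<phi>1 t) = t" using ag\<psi> a by simp
    have c: "\<phi>1 t \<in> treeOf G'" using a GG' by blast
    have "t \<in> treeOf F'" using trF' b c by force
    moreover have "\<phi>' t = \<phi>1 t" unfolding \<phi>'_def using b c inj\<psi>' by (metis inv_into_f_f)
    ultimately show ?thesis by simp
  qed
  have FF1: "treeOf F \<subseteq> treeOf F1" by (rule treeOf_mono) (auto simp: F1_def)
  have "treeOf F \<subseteq> treeOf F'" using FF1 key by blast
  moreover have "\<forall>t\<in>treeOf F. \<phi>' t = \<phi> t" using FF1 key ag1 by auto
  moreover have "R \<in> F'"
  proof -
    have "treeOf F1 \<subseteq> treeOf F'" using key by blast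
    hence "runs (treeOf F1) \<subseteq> runs (treeOf F')" by (rule runs_mono)
    thus ?thesis using runs_treeOf[OF fin1] runs_treeOf[OF fin'] by (auto simp: F1_def)
  qed
  moreover have "S \<in> run_map \<phi>' ` F'"
    using invS by (metis F'_def G'_def image_eqI insertI1)
  ultimately have X: "treeOf F \<subseteq> treeOf F' \<and> (\<forall>t\<in>treeOf F. \<phi>' t = \<phi> t) \<and> R \<in> F' \<and> S \<in> run_map \<phi>' ` F'"
    by blast
  show ?thesis
    apply (rule exI[of _ F'])
    apply (rule exI[of _ \<phi>'])
    using fin' Fr' e' X by blast
qed


theorem mainTheorem5:
  fixes T1 :: "'a list set" and A1 :: "(nat \<Rightarrow> 'a) set"
    and T2 :: "'b list set" and A2 :: "(nat \<Rightarrow> 'b) set"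
    and T :: "'a list set" and A :: "(nat \<Rightarrow> 'a) set"
    and f :: "'a list \<Rightarrow> 'b list"
  assumes "game T1 A1" and "game T2 A2"
    and "countable T1" and "countable T2" and "countable A1" and "countable A2"
    and "injective_fin T1 A1" and "injective_fin T2 A2"
    and "finite_game T A" and "game_le T A T1 A1"
    and "game_embedding f T A T2 A2"
  shows "\<exists>f'. chronological f' T1 T2 \<and> bij_betw f' T1 T2 \<and> (\<forall>t\<in>T. f' t = f t) \<and>
              (\<forall>R\<in>runs T1. run_map f' R \<in> A2 \<longleftrightarrow> R \<in> A1)"
proof -
  note g1 = assms(1) and g2 = assms(2) and cT1 = assms(3) and cT2 = assms(4)
    and cA1 = assms(5) and cA2 = assms(6) and inj1 = assms(7) and inj2 = assms(8)
    and fg = assms(9) and le = assms(10) and ef = assms(11)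
  have gt1: "game_tree T1" and A1r: "A1 \<subseteq> runs T1" using g1 by (auto simp: game_def)
  have gt2: "game_tree T2" and A2r: "A2 \<subseteq> runs T2" using g2 by (auto simp: game_def)
  have gt: "game_tree T" and finT: "finite (runs T)" using fg by (auto simp: finite_game_def game_def)
  have TT1: "T \<subseteq> T1" and AT: "A = A1 \<inter> runs T" using le by (auto simp: game_le_def)
  define rt1 where "rt1 t = (SOME R. R \<in> runs T1 \<and> restr R (length t) = t)" for t
  have rt1: "rt1 t \<in> runs T1 \<and> restr (rt1 t) (length t) = t" if "t \<in> T1" for t
  proof -
    from exists_run[OF gt1 that] have "\<exists>R. R \<in> runs T1 \<and> restr R (length t) = t" by blast
    thus ?thesis unfolding rt1_def by (rule someI_ex)
  qed
  define rt2 where "rt2 t = (SOME R. R \<in> runs T2 \<and> restr R (length t) = t)" for t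
  have rt2: "rt2 t \<in> runs T2 \<and> restr (rt2 t) (length t) = t" if "t \<in> T2" for t
  proof -
    from exists_run[OF gt2 that] have "\<exists>R. R \<in> runs T2 \<and> restr R (length t) = t" by blast
    thus ?thesis unfolding rt2_def by (rule someI_ex)
  qed
  define B1 where "B1 = rt1 ` T1 \<union> A1"
  define B2 where "B2 = rt2 ` T2 \<union> A2"
  have B1ne: "B1 \<noteq> {}" using injective_nonempty[OF inj1] by (auto simp: B1_def)
  have B2ne: "B2 \<noteq> {}" using injective_nonempty[OF inj2] by (auto simp: B2_def)
  have cB1: "countable B1" using cT1 cA1 by (simp add: B1_def)
  have cB2: "countable B2" using cT2 cA2 by (simp add: B2_def)
  have B1r: "B1 \<subseteq> runs T1" using rt1 A1r by (auto simp: B1_def)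
  have B2r: "B2 \<subseteq> runs T2" using rt2 A2r by (auto simp: B2_def)
  define r1 where "r1 = from_nat_into B1"
  define r2 where "r2 = from_nat_into B2"
  have rg1: "range r1 = B1" unfolding r1_def using B1ne cB1 by simp
  have rg2: "range r2 = B2" unfolding r2_def using B2ne cB2 by simp
  have r1r: "r1 n \<in> runs T1" for n using rg1 B1r by auto
  have r2r: "r2 n \<in> runs T2" for n using rg2 B2r by auto
  have Teq: "treeOf (runs T) = T"
  proof
    show "treeOf (runs T) \<subseteq> T" by (rule treeOf_sub) simp
    show "T \<subseteq> treeOf (runs T)"
    proof
      fix t assume "t \<in> T"
      then obtain R where "R \<in> runs T" "restr R (length t) = t" using exists_run[OF gt] by blast
      thus "t \<in> treeOf (runs T)" by (metis treeOf_I)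
    qed
  qed
  define P where "P F \<phi> \<longleftrightarrow> finite F \<and> F \<subseteq> runs T1 \<and> game_embedding \<phi> (treeOf F) (A1 \<inter> F) T2 A2"
    for F :: "(nat \<Rightarrow> 'a) set" and \<phi> :: "'a list \<Rightarrow> 'b list"
  define Q where "Q n F \<phi> F' \<phi>' \<longleftrightarrow> P F' \<phi>' \<and> treeOf F \<subseteq> treeOf F' \<and>
     (\<forall>t\<in>treeOf F. \<phi>' t = \<phi> t) \<and> r1 n \<in> F' \<and> r2 n \<in> run_map \<phi>' ` F'"
    for n F \<phi> F' \<phi>'
  have stepQ: "\<exists>p'. Q n (fst p) (snd p) (fst p') (snd p')" if Pp: "P (fst p) (snd p)" for p n
  proof -
    have "finite (fst p)" "fst p \<subseteq> runs T1" "game_embedding (snd p) (treeOf (fst p)) (A1 \<inter> fst p) T2 A2"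
      using Pp unfolding P_def by blast+
    from step[OF cT1 cT2 inj1 inj2 this r1r r2r]
    have "\<exists>F' \<phi>'. Q n (fst p) (snd p) F' \<phi>'" unfolding Q_def P_def .
    thus ?thesis by simp
  qed
  define st where "st = rec_nat (runs T, f) (\<lambda>n p. SOME p'. Q n (fst p) (snd p) (fst p') (snd p'))"
  have st0: "st 0 = (runs T, f)" and stS: "\<And>n. st (Suc n) = (SOME p'. Q n (fst (st n)) (snd (st n)) (fst p') (snd p'))"
    by (simp_all add: st_def)
  have P0: "P (runs T) f"
    unfolding P_def using finT runs_mono[OF TT1] ef Teq AT by (simp add: Int_commute)
  have Pn: "P (fst (st n)) (snd (st n))" for n
  proof (induction n)
    case 0 then show ?case using st0 P0 by simp
  next
    case (Suc n)
    have "Q n (fst (st n)) (snd (st n)) (fst (st (Suc n))) (snd (st (Suc n)))"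
      unfolding stS using stepQ[OF Suc] by (rule someI_ex)
    thus ?case unfolding Q_def by blast
  qed
  have Qn: "Q n (fst (st n)) (snd (st n)) (fst (st (Suc n))) (snd (st (Suc n)))" for n
    unfolding stS using stepQ[OF Pn] by (rule someI_ex)
  define Fs where "Fs n = fst (st n)" for n
  define ph where "ph n = snd (st n)" for n
  have Pn': "finite (Fs n) \<and> Fs n \<subseteq> runs T1 \<and> game_embedding (ph n) (treeOf (Fs n)) (A1 \<inter> Fs n) T2 A2" for n
    using Pn[of n] unfolding P_def Fs_def ph_def by blast
  have Qn': "treeOf (Fs n) \<subseteq> treeOf (Fs (Suc n)) \<and> (\<forall>t\<in>treeOf (Fs n). ph (Suc n) t = ph n t)
      \<and> r1 n \<in> Fs (Suc n) \<and> r2 n \<in> run_map (ph (Suc n)) ` Fs (Suc n)" for n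
    using Qn[of n] unfolding Q_def Fs_def ph_def by blast
  have mono: "treeOf (Fs n) \<subseteq> treeOf (Fs m) \<and> (\<forall>t\<in>treeOf (Fs n). ph m t = ph n t)" if "n \<le> m" for n m
    using that
  proof (induction m rule: dec_induct)
    case base then show ?case by simp
  next
    case (step m) then show ?case using Qn'[of m] by auto
  qed
  define f' where "f' t = ph (LEAST n. t \<in> treeOf (Fs n)) t" for t
  have key: "f' t = ph n t" if "t \<in> treeOf (Fs n)" for t n
  proof -
    let ?m = "LEAST n. t \<in> treeOf (Fs n)"
    have "?m \<le> n" using that by (rule Least_le)
    moreover have "t \<in> treeOf (Fs ?m)" using that by (rule LeastI)
    ultimately show ?thesis using mono unfolding f'_def by metis
  qed
  have ch: "chronological (ph n) (treeOf (Fs n)) T2" and inj: "inj_on (ph n) (treeOf (Fs n))"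
    and rr: "\<forall>R\<in>runs (treeOf (Fs n)). run_map (ph n) R \<in> A2 \<longleftrightarrow> R \<in> A1 \<inter> Fs n" for n
    using Pn' by (auto simp: game_embedding_def)
  have rtF: "runs (treeOf (Fs n)) = Fs n" for n using Pn' runs_treeOf by blast
  have cover: "\<exists>n. t \<in> treeOf (Fs n)" if "t \<in> T1" for t
  proof -
    have "rt1 t \<in> B1" using that by (simp add: B1_def)
    then obtain m where "r1 m = rt1 t" using rg1 by (metis rangeE)
    hence "rt1 t \<in> Fs (Suc m)" using Qn' by metis
    hence "restr (rt1 t) (length t) \<in> treeOf (Fs (Suc m))" by blast
    thus ?thesis using rt1[OF that] by auto
  qed
  have rmap: "run_map f' R = run_map (ph n) R" if "R \<in> Fs n" for R n
    by (rule run_map_cong) (use key that in blast)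
  have chf: "chronological f' T1 T2"
    unfolding chronological_def
  proof (intro ballI conjI allI)
    fix t assume "t \<in> T1"
    then obtain n where t: "t \<in> treeOf (Fs n)" using cover by blast
    show "f' t \<in> T2" "length (f' t) = length t"
      using ch[of n] t key[OF t] by (auto simp: chronological_def)
    fix k
    show "f' (take k t) = take k (f' t)"
      using ch[of n] t key[OF t] key[OF treeOf_take[OF t]] by (auto simp: chronological_def)
  qed
  have injf: "inj_on f' T1"
  proof (rule inj_onI)
    fix t u assume "t \<in> T1" "u \<in> T1" and eq: "f' t = f' u"
    then obtain n m where t: "t \<in> treeOf (Fs n)" and u: "u \<in> treeOf (Fs m)" using cover by blast
    have t': "t \<in> treeOf (Fs (max n m))" and u': "u \<in> treeOf (Fs (max n m))"
      using mono[of n "max n m"] mono[of m "max n m"] t u by auto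
    show "t = u" using eq key[OF t'] key[OF u'] inj[of "max n m"] t' u' by (auto dest: inj_onD)
  qed
  have surj: "T2 \<subseteq> f' ` T1"
  proof
    fix s assume s: "s \<in> T2"
    have "rt2 s \<in> B2" using s by (simp add: B2_def)
    then obtain m where m: "r2 m = rt2 s" using rg2 by (metis rangeE)
    then obtain R' where R': "R' \<in> Fs (Suc m)" "rt2 s = run_map (ph (Suc m)) R'" using Qn'[of m] by auto
    have "s = restr (rt2 s) (length s)" using rt2[OF s] by simp
    also have "\<dots> = ph (Suc m) (restr R' (length s))"
      using R' chron_restr[OF ch, of R' "Suc m"] rtF by simp
    also have "\<dots> = f' (restr R' (length s))" using key R'(1) by (metis treeOf_I)
    finally show "s \<in> f' ` T1" using R'(1) Pn' treeOf_sub by (metis image_eqI subsetD treeOf_I)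
  qed
  have bij: "bij_betw f' T1 T2"
    unfolding bij_betw_def using injf surj chf by (auto simp: chronological_def)
  have agree: "\<forall>t\<in>T. f' t = f t"
  proof
    fix t assume "t \<in> T"
    hence "t \<in> treeOf (Fs 0)" using Teq st0 by (simp add: Fs_def)
    thus "f' t = f t" using key st0 by (simp add: ph_def)
  qed
  have runsP: "\<forall>R\<in>runs T1. run_map f' R \<in> A2 \<longleftrightarrow> R \<in> A1"
  proof (intro ballI iffI)
    fix R assume R: "R \<in> runs T1" and "R \<in> A1"
    have "R \<in> range r1" using rg1 \<open>R \<in> A1\<close> by (simp add: B1_def)
    then obtain m where m: "r1 m = R" by blast
    hence RF: "R \<in> Fs (Suc m)" using Qn' by metis
    show "run_map f' R \<in> A2" using rr[of "Suc m"] rtF RF rmap[OF RF] \<open>R \<in> A1\<close> by auto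
  next
    fix R assume R: "R \<in> runs T1" and a2: "run_map f' R \<in> A2"
    have "run_map f' R \<in> range r2" using rg2 a2 by (simp add: B2_def)
    then obtain m where m: "r2 m = run_map f' R" by (metis rangeE)
    then obtain R' where R': "R' \<in> Fs (Suc m)" "run_map f' R = run_map (ph (Suc m)) R'" using Qn'[of m] by auto
    have R'r: "R' \<in> runs T1" using R' Pn' by blast
    have "run_map f' R' = run_map f' R" using rmap[OF R'(1)] R'(2) by simp
    hence "R' = R" using chron_inj_runs[OF chf injf R'r R] by simp
    thus "R \<in> A1" using rr[of "Suc m"] rtF R' a2 by auto
  qed
  show ?thesis using chf bij agree runsP by blast
qed

end
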